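(* Let $n\ge 2$ be an integer, let $\gamma\ge 2n+2$ be an integer, and fix $\epsilon\in\left(\frac{1}{\gamma^2},\frac{1}{\gamma}\right)$. Set $\alpha_1=1$ and $\alpha_p=2^{\frac{p-1}{n}}$ for $2\le p\le n$, and $\widehat{\alpha}=\max_{1\le p\le n}\alpha_p$. For $p\in\{1,\dots,n\}$ and $q\in\{0,\dots,2n\}$ define $\psi^{p,q}:[0,1]\to\mathbb{R}$ by $\psi^{p,q}(x)=\alpha_p(x+q\epsilon)$, and $\Psi^q:[0,1]^n\to\mathbb{R}$ by $\Psi^q(x_1,\dots,x_n)=\sum_{p=1}^n\psi^{p,q}(x_p)$. For $k\in\mathbb{N}$ and $i\in\{0,\dots,\gamma^k\}$ put $\lambda^{p,q}_{k,i}=\psi^{p,q}\!\left(\frac{i}{\gamma^k}\right)$, put $\epsilon_k=\frac{\widehat{\alpha}}{\gamma^k}$, and let $A^q_{k,i}$ be the closed interval $\left[\frac{i}{\gamma^k}+q\epsilon,\ \frac{i}{\gamma^k}+\frac{\gamma^2-1}{\gamma^{k+2}}+q\epsilon\right]$. Then for every $p\in\{1,\dots,n\}$ and $q\in\{0,\dots,2n\}$ the following hold: (1) there is a constant $C>0$ independent of $k$ and $i$ such that for all $k\in\mathbb{N}$ and $0\le i\le \gamma^k-1$, $\lambda^{p,q}_{k,i}<\lambda^{p,q}_{k,i+1}\le\lambda^{p,q}_{k,i}+C\,2^{-k}$; (2) for all $k\in\mathbb{N}$, $i\in\{0,\dots,\gamma^k-1\}$ and $i'\in\{0,\dots,\gamma^{k+1}\}$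 such that the closed intervals $A^q_{k,i}$ and $A^q_{k+1,i'}$ do not intersect and $A^q_{k+1,i'}$ lies in the gap between $A^q_{k,i}$ and $A^q_{k,i+1}$, one has $\lambda^{p,q}_{k,i}\le\lambda^{p,q}_{k+1,i'}\le\lambda^{p,q}_{k,i}+\epsilon_k-\epsilon_{k+1}$; (3) for every $k\in\mathbb{N}$ and any two distinct tuples $(i_1,\dots,i_n)\ne(j_1,\dots,j_n)\in\{0,\dots,\gamma^k\}^n$, $$\Psi^q\!\left(\tfrac{i_1}{\gamma^k},\dots,\tfrac{i_n}{\gamma^k}\right)\ne\Psi^q\!\left(\tfrac{j_1}{\gamma^k},\dots,\tfrac{j_n}{\gamma^k}\right).$$
   Context: $\mathbb{N}$ denotes the positive integers. The "gap between $A^q_{k,i}$ and $A^q_{k,i+1}$" is the open interval between the right endpoint of $A^q_{k,i}$ and the left endpoint of $A^q_{k,i+1}$. *)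

theory Defs
  imports Complex_Main
begin

definition alpha :: "nat \<Rightarrow> nat \<Rightarrow> real" where
  "alpha n p = (if p = 1 then 1 else 2 powr ((real p - 1) / real n))"

definition alpha_hat :: "nat \<Rightarrow> real" where
  "alpha_hat n = Max (alpha n ` {1..n})"

definition psi :: "nat \<Rightarrow> real \<Rightarrow> nat \<Rightarrow> nat \<Rightarrow> real \<Rightarrow> real" where
  "psi n eps p q x = alpha n p * (x + real q * eps)"

definition Psi :: "nat \<Rightarrow> real \<Rightarrow> nat \<Rightarrow> (nat \<Rightarrow> real) \<Rightarrow> real" where
  "Psi n eps q x = (\<Sum>p = 1..n. psi n eps p q (x p))"

definition lam :: "nat \<Rightarrow> nat \<Rightarrow> real \<Rightarrow> nat \<Rightarrow> nat \<Rightarrow> nat \<Rightarrow> nat \<Rightarrow> real" where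
  "lam n \<gamma> eps p q k i = psi n eps p q (real i / real \<gamma> ^ k)"

definition eps_k :: "nat \<Rightarrow> nat \<Rightarrow> nat \<Rightarrow> real" where
  "eps_k n \<gamma> k = alpha_hat n / real \<gamma> ^ k"

definition A_left :: "nat \<Rightarrow> real \<Rightarrow> nat \<Rightarrow> nat \<Rightarrow> nat \<Rightarrow> real" where
  "A_left \<gamma> eps q k i = real i / real \<gamma> ^ k + real q * eps"

definition A_right :: "nat \<Rightarrow> real \<Rightarrow> nat \<Rightarrow> nat \<Rightarrow> nat \<Rightarrow> real" where
  "A_right \<gamma> eps q k i =
     real i / real \<gamma> ^ k + (real \<gamma> ^ 2 - 1) / real \<gamma> ^ (k + 2) + real q * eps"

definition A :: "nat \<Rightarrow> real \<Rightarrow> nat \<Rightarrow> nat \<Rightarrow> nat \<Rightarrow> real set" where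
  "A \<gamma> eps q k i = {A_left \<gamma> eps q k i .. A_right \<gamma> eps q k i}"

definition gap :: "nat \<Rightarrow> real \<Rightarrow> nat \<Rightarrow> nat \<Rightarrow> nat \<Rightarrow> real set" where
  "gap \<gamma> eps q k i = {A_right \<gamma> eps q k i <..< A_left \<gamma> eps q k (i + 1)}"

end

theory Submission
  imports Defs "Jordan_Normal_Form.Determinant" "HOL-Library.Z2"
begin


lemma rot:
  fixes t :: real and c :: "nat \<Rightarrow> real"
  assumes tn: "t ^ n = 2" and r: "r \<le> n"
  shows "t ^ r * (\<Sum>j<n. c j * t ^ j) =
    (\<Sum>s<r. 2 * c (s + n - r) * t ^ s) + (\<Sum>s=r..<n. c (s - r) * t ^ s)"
proof -
  have "t ^ r * (\<Sum>j<n. c j * t ^ j) = (\<Sum>j=0..<n. c j * t ^ (j + r))"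
    by (simp add: sum_distrib_left lessThan_atLeast0 power_add mult_ac)
  also have "\<dots> = (\<Sum>j=0..<n-r. c j * t ^ (j + r)) + (\<Sum>j=n-r..<n. c j * t ^ (j + r))"
    using r by (simp add: sum.atLeastLessThan_concat)
  also have "(\<Sum>j=0..<n-r. c j * t ^ (j + r)) = (\<Sum>s=r..<n. c (s - r) * t ^ s)"
  proof -
    have "(\<Sum>s=r..<n. c (s - r) * t ^ s) = (\<Sum>s=0+r..<(n-r)+r. c (s - r) * t ^ s)"
      using r by simp
    also have "\<dots> = (\<Sum>j=0..<n-r. c j * t ^ (j + r))"
      by (subst sum.shift_bounds_nat_ivl) simp
    finally show ?thesis by simp
  qed
  also have "(\<Sum>j=n-r..<n. c j * t ^ (j + r)) = (\<Sum>s<r. 2 * c (s + n - r) * t ^ s)"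
  proof -
    have "(\<Sum>j=n-r..<n. c j * t ^ (j + r)) = (\<Sum>j=0+(n-r)..<r+(n-r). c j * t ^ (j + r))"
      using r by simp
    also have "\<dots> = (\<Sum>s=0..<r. c (s + (n - r)) * t ^ (s + (n - r) + r))"
      by (subst sum.shift_bounds_nat_ivl) simp
    also have "\<dots> = (\<Sum>s<r. 2 * c (s + n - r) * t ^ s)"
    proof (rule sum.cong)
      fix s assume "s \<in> {..<r}"
      have "s + (n - r) + r = s + n" using r by simp
      then have "t ^ (s + (n - r) + r) = 2 * t ^ s" using tn by (simp add: power_add)
      moreover have "s + (n - r) = s + n - r" using r by simp
      ultimately show "c (s + (n - r)) * t ^ (s + (n - r) + r) = 2 * c (s + n - r) * t ^ s"
        by simp
    qed (simp add: lessThan_atLeast0)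
    finally show ?thesis .
  qed
  finally show ?thesis by simp
qed

lemma prod_list_ones: "\<forall>x \<in> set xs. x = (1::'a::monoid_mult) \<Longrightarrow> prod_list xs = 1"
  by (induction xs) auto

lemma of_int_bit: "(of_int k :: bit) = (if even k then 0 else 1)"
proof (cases "even k")
  case True
  then obtain m where "k = 2 * m" by blast
  then show ?thesis by simp
next
  case False
  then obtain m where "k = 2 * m + 1" using oddE by blast
  then show ?thesis by simp
qed

lemma core:
  fixes t :: real and c :: "nat \<Rightarrow> int"
  assumes n: "n \<ge> 1" and tn: "t ^ n = 2"
    and rel: "(\<Sum>j<n. of_int (c j) * t ^ j) = 0" and odd: "odd (c 0)"
  shows False
proof -
  define N where "N = mat n n (\<lambda>(r,s). if r \<le> s then c (s - r) else 2 * c (s + n - r))"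
  have Nc: "N \<in> carrier_mat n n" unfolding N_def by simp
  define w where "w = vec n (\<lambda>i. t ^ i)"
  let ?NR = "map_mat (of_int :: int \<Rightarrow> real) N"
  have NRc: "?NR \<in> carrier_mat n n" using Nc by simp
  have "?NR *\<^sub>v w = 0\<^sub>v n"
  proof (rule eq_vecI)
    fix r assume r: "r < dim_vec (0\<^sub>v n :: real vec)"
    then have r: "r < n" by simp
    have "(?NR *\<^sub>v w) $ r = (\<Sum>s<n. of_int (N $$ (r, s)) * t ^ s)"
      unfolding mult_mat_vec_def scalar_prod_def w_def using r Nc
      by (auto simp: lessThan_atLeast0 intro!: sum.cong)
    also have "\<dots> = (\<Sum>s<r. 2 * of_int (c (s + n - r)) * t ^ s) + (\<Sum>s=r..<n. of_int (c (s - r)) * t ^ s)"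
    proof -
      have "(\<Sum>s<n. of_int (N $$ (r, s)) * t ^ s) = (\<Sum>s=0..<r. of_int (N $$ (r, s)) * t ^ s) + (\<Sum>s=r..<n. of_int (N $$ (r, s)) * t ^ s)"
        using r by (simp add: lessThan_atLeast0 sum.atLeastLessThan_concat)
      also have "(\<Sum>s=0..<r. of_int (N $$ (r, s)) * t ^ s) = (\<Sum>s<r. 2 * of_int (c (s + n - r)) * t ^ s)"
        using r by (auto simp: N_def lessThan_atLeast0 intro!: sum.cong)
      also have "(\<Sum>s=r..<n. of_int (N $$ (r, s)) * t ^ s) = (\<Sum>s=r..<n. of_int (c (s - r)) * t ^ s)"
        using r by (auto simp: N_def intro!: sum.cong)
      finally show ?thesis .
    qed
    also have "\<dots> = t ^ r * (\<Sum>j<n. of_int (c j) * t ^ j)"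
      using rot[OF tn, of r "\<lambda>j. of_int (c j)"] r by simp
    also have "\<dots> = 0" using rel by simp
    finally show "(?NR *\<^sub>v w) $ r = 0\<^sub>v n $ r" using r by simp
  qed (use Nc in \<open>simp add: w_def\<close>)
  moreover have "w \<in> carrier_vec n" unfolding w_def by simp
  moreover have "w \<noteq> 0\<^sub>v n"
  proof
    assume "w = 0\<^sub>v n"
    then have "w $ 0 = 0" using n by simp
    then show False using n unfolding w_def by simp
  qed
  ultimately have "det ?NR = 0" using det_0_iff_vec_prod_zero[OF NRc] by blast
  then have d0: "det N = 0" by simp
  let ?NB = "map_mat (of_int :: int \<Rightarrow> bit) N"
  have NBc: "?NB \<in> carrier_mat n n" using Nc by simp
  have ut: "upper_triangular ?NB"
    unfolding upper_triangular_def using Nc by (auto simp: N_def of_int_bit)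
  have "det ?NB = prod_list (diag_mat ?NB)" by (rule det_upper_triangular[OF ut NBc])
  also have "\<dots> = 1"
  proof -
    have "\<forall>x \<in> set (diag_mat ?NB). x = 1"
      using Nc odd by (auto simp: diag_mat_def N_def of_int_bit)
    then show ?thesis by (rule prod_list_ones)
  qed
  finally have "det ?NB = 1" .
  moreover have "det ?NB = of_int (det N)" by simp
  ultimately show False using d0 by simp
qed



lemma indep:
  fixes t :: real and c :: "nat \<Rightarrow> int"
  assumes n: "n \<ge> 1" and tn: "t ^ n = 2" and rel0: "(\<Sum>j<n. of_int (c j) * t ^ j) = 0"
  shows "\<forall>j<n. c j = 0"
proof -
  have "\<forall>c. (\<Sum>j<n. nat \<bar>c j\<bar>) = S \<longrightarrow> (\<Sum>j<n. of_int (c j) * t ^ j) = 0 \<longrightarrow> (\<forall>j<n. c j = 0)" for S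
  proof (induction S rule: less_induct)
    case (less S)
    show ?case
    proof (rule allI, intro impI)
      fix c :: "nat \<Rightarrow> int"
      assume S: "(\<Sum>j<n. nat \<bar>c j\<bar>) = S" and rel: "(\<Sum>j<n. of_int (c j) * t ^ j) = 0"
      show "\<forall>j<n. c j = 0"
      proof (cases "\<forall>j<n. even (c j)")
        case True
        define c' where "c' j = c j div 2" for j
        have cc: "j < n \<Longrightarrow> c j = 2 * c' j" for j using True by (simp add: c'_def)
        have "(\<Sum>j<n. of_int (c j) * t ^ j) = 2 * (\<Sum>j<n. of_int (c' j) * t ^ j)"
          by (simp add: sum_distrib_left cc mult.assoc)
        then have rel': "(\<Sum>j<n. of_int (c' j) * t ^ j) = 0" using rel by simp
        show ?thesis
        proof (rule ccontr)
          assume "\<not> (\<forall>j<n. c j = 0)"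
          then obtain j0 where j0: "j0 < n" "c j0 \<noteq> 0" by blast
          have "(\<Sum>j<n. nat \<bar>c' j\<bar>) < (\<Sum>j<n. nat \<bar>c j\<bar>)"
          proof (rule sum_strict_mono_ex1)
            show "\<forall>x\<in>{..<n}. nat \<bar>c' x\<bar> \<le> nat \<bar>c x\<bar>"
            proof
              fix x assume "x \<in> {..<n}"
              then have "c x = 2 * c' x" using cc by simp
              then show "nat \<bar>c' x\<bar> \<le> nat \<bar>c x\<bar>" by (simp add: abs_mult)
            qed
            have "c j0 = 2 * c' j0" using cc j0 by simp
            then have "nat \<bar>c' j0\<bar> < nat \<bar>c j0\<bar>" using j0 by (simp add: abs_mult)
            then show "\<exists>a\<in>{..<n}. nat \<bar>c' a\<bar> < nat \<bar>c a\<bar>" using j0 by blast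
          qed simp
          then have "(\<Sum>j<n. nat \<bar>c' j\<bar>) < S" using S by simp
          then have "\<forall>j<n. c' j = 0" using less.IH rel' by blast
          then have "c' j0 = 0" using j0 by blast
          then show False using cc[OF j0(1)] j0 by simp
        qed
      next
        case False
        define m where "m = (LEAST j. j < n \<and> odd (c j))"
        have ex: "\<exists>j. j < n \<and> odd (c j)" using False by auto
        have m: "m < n" "odd (c m)" using LeastI_ex[OF ex] unfolding m_def by auto
        have bel: "j < m \<Longrightarrow> even (c j)" for j
          using not_less_Least[of j "\<lambda>j. j < n \<and> odd (c j)"] m unfolding m_def[symmetric] by auto
        define d where "d i = (if i < n - m then c (i + m) else c (i + m - n) div 2)" for i
        have "2 * (\<Sum>i<n. of_int (d i) * t ^ i) = t ^ (n - m) * (\<Sum>j<n. of_int (c j) * t ^ j)"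
        proof -
          have "2 * (\<Sum>i<n. of_int (d i) * t ^ i) = (\<Sum>i<n. 2 * of_int (d i) * t ^ i)"
            by (simp add: sum_distrib_left mult.assoc)
          also have "\<dots> = (\<Sum>i=0..<n-m. 2 * of_int (d i) * t ^ i) + (\<Sum>i=n-m..<n. 2 * of_int (d i) * t ^ i)"
            by (simp add: lessThan_atLeast0 sum.atLeastLessThan_concat)
          also have "(\<Sum>i=0..<n-m. 2 * of_int (d i) * t ^ i) = (\<Sum>s<n-m. 2 * of_int (c (s + n - (n - m))) * t ^ s)"
            using m by (auto simp: lessThan_atLeast0 d_def intro!: sum.cong)
          also have "(\<Sum>i=n-m..<n. 2 * of_int (d i) * t ^ i) = (\<Sum>s=n-m..<n. of_int (c (s - (n - m))) * t ^ s)"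
          proof (rule sum.cong)
            fix s assume s: "s \<in> {n-m..<n}"
            then have e: "even (c (s + m - n))" using bel m by auto
            have "2 * d s = c (s - (n - m))" using s e m by (auto simp: d_def)
            then have "2 * real_of_int (d s) = of_int (c (s - (n - m)))" by (metis of_int_mult of_int_numeral)
            then show "2 * of_int (d s) * t ^ s = of_int (c (s - (n - m))) * t ^ s" by simp
          qed simp
          finally show ?thesis using rot[OF tn, of "n - m" "\<lambda>j. of_int (c j)"] by simp
        qed
        then have "(\<Sum>i<n. of_int (d i) * t ^ i) = 0" using rel by simp
        moreover have "odd (d 0)" using m by (simp add: d_def)
        ultimately show ?thesis using core[OF n tn] by blast
      qed
    qed
  qed
  then show ?thesis using rel0 by blast
qed



lemma tpow: "n \<ge> 1 \<Longrightarrow> (2 powr (1 / real n)) ^ n = (2::real)"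
  by (simp add: powr_realpow[symmetric] powr_powr)

lemma alpha_pow: "alpha n (Suc j) = (2 powr (1 / real n)) ^ j"
proof -
  have "(2 powr (1 / real n)) ^ j = 2 powr (1 / real n * real j)"
    by (simp add: powr_realpow[symmetric] powr_powr)
  then show ?thesis by (simp add: alpha_def)
qed

lemma alpha_pos: "alpha n p > 0" by (simp add: alpha_def)

lemma alpha_le_hat: "p \<in> {1..n} \<Longrightarrow> alpha n p \<le> alpha_hat n"
  unfolding alpha_hat_def by (rule Max_ge) auto

lemma part1:
  fixes \<gamma> :: nat
  assumes g: "\<gamma> \<ge> 2"
  shows "\<exists>C > 0. \<forall>k \<ge> 1. \<forall>i \<le> \<gamma> ^ k - 1.
        lam n \<gamma> eps p q k i < lam n \<gamma> eps p q k (i + 1) \<and>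
        lam n \<gamma> eps p q k (i + 1) \<le> lam n \<gamma> eps p q k i + C * 2 powr (- real k)"
proof (intro exI[of _ "alpha n p"] conjI allI impI)
  show "alpha n p > 0" by (rule alpha_pos)
  fix k i :: nat
  have K: "real \<gamma> ^ k > 0" using g by simp
  have eq: "lam n \<gamma> eps p q k (i + 1) = lam n \<gamma> eps p q k i + alpha n p / real \<gamma> ^ k"
    unfolding lam_def psi_def by (simp add: add_divide_distrib algebra_simps)
  show "lam n \<gamma> eps p q k i < lam n \<gamma> eps p q k (i + 1)"
    using eq K alpha_pos[of n p] by simp
  have "(2::real) ^ k \<le> real \<gamma> ^ k" using g by (intro power_mono) auto
  then have "alpha n p / real \<gamma> ^ k \<le> alpha n p / 2 ^ k"
    using alpha_pos[of n p] K by (intro divide_left_mono) auto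
  also have "\<dots> = alpha n p * 2 powr (- real k)"
    by (simp add: powr_minus powr_realpow divide_inverse)
  finally show "lam n \<gamma> eps p q k (i + 1) \<le> lam n \<gamma> eps p q k i + alpha n p * 2 powr (- real k)"
    using eq by simp
qed

lemma part2:
  fixes \<gamma> :: nat
  assumes g: "\<gamma> \<ge> 2" and p: "p \<in> {1..n}"
    and dis: "A \<gamma> eps q (k + 1) i' \<subseteq> gap \<gamma> eps q k i"
  shows "lam n \<gamma> eps p q k i \<le> lam n \<gamma> eps p q (k + 1) i' \<and>
        lam n \<gamma> eps p q (k + 1) i' \<le>
          lam n \<gamma> eps p q k i + eps_k n \<gamma> k - eps_k n \<gamma> (k + 1)"
proof -
  define g' where "g' = real \<gamma>"
  have g1: "g' \<ge> 2" using g unfolding g'_def by simp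
  have K: "g' ^ k > 0" "g' ^ (k+1) > 0" "g' ^ (k+2) > 0" "g' ^ (k+3) > 0" using g1 by auto
  have "g' * g' \<ge> 2 * 2" using g1 by (intro mult_mono) auto
  then have sq: "g'^2 - 1 \<ge> 0" by (simp add: power2_eq_square)
  have nn2: "(g'^2 - 1) / g' ^ (k+2) \<ge> 0" "(g'^2 - 1) / g' ^ (k+3) \<ge> 0"
    using sq K by simp_all
  have LR: "A_left \<gamma> eps q (k+1) i' \<le> A_right \<gamma> eps q (k+1) i'"
  proof -
    have z: "0 \<le> (real \<gamma> ^ 2 - 1) / real \<gamma> ^ (k + 1 + 2)"
      by (rule divide_nonneg_nonneg) (use sq in \<open>auto simp: g'_def\<close>)
    show ?thesis unfolding A_left_def A_right_def using z by linarith
  qed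
  then have m1: "A_left \<gamma> eps q (k+1) i' \<in> gap \<gamma> eps q k i"
    and m2: "A_right \<gamma> eps q (k+1) i' \<in> gap \<gamma> eps q k i"
    using dis unfolding A_def by auto
  have h1: "real i / g' ^ k + (g'^2 - 1) / g' ^ (k+2) < real i' / g' ^ (k+1)"
    using m1 unfolding gap_def A_left_def A_right_def g'_def by simp
  have e3: "k + 1 + 2 = k + 3" by simp
  have h2: "real i' / g' ^ (k+1) + (g'^2 - 1) / g' ^ (k+3) < real (i+1) / g' ^ k"
    using m2 unfolding gap_def A_left_def A_right_def g'_def e3 by simp
  define D where "D = real i' / g' ^ (k+1) - real i / g' ^ k"
  have D0: "D \<ge> 0" using h1 nn2 unfolding D_def by linarith
  have "real i' / g' ^ (k+1) < real (i+1) / g' ^ k" using h2 nn2 by (simp add: add.commute)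
  also have "\<dots> = real (i+1) * g' / g' ^ (k+1)" using K g1 by (simp add: field_simps)
  finally have "real i' / g' ^ (k+1) < real (i+1) * g' / g' ^ (k+1)" .
  then have "real i' < real (i+1) * g'" using K(2) by (meson divide_less_cancel)
  then have "i' < (i+1) * \<gamma>" unfolding g'_def by (metis of_nat_less_iff of_nat_mult)
  then have "real i' \<le> real (i+1) * g' - 1" unfolding g'_def
    by (metis Suc_leI of_nat_Suc of_nat_le_iff of_nat_mult add.commute le_diff_eq)
  then have "real i' / g' ^ (k+1) \<le> (real (i+1) * g' - 1) / g' ^ (k+1)"
    using K by (simp add: divide_right_mono)
  also have "\<dots> = real i / g' ^ k + (1 / g' ^ k - 1 / g' ^ (k+1))"
    using K g1 by (simp add: field_simps)
  finally have DE: "D \<le> 1 / g' ^ k - 1 / g' ^ (k+1)" unfolding D_def by simp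
  have ap: "0 < alpha n p" "alpha n p \<le> alpha_hat n" using alpha_pos alpha_le_hat[OF p] by auto
  have diff: "lam n \<gamma> eps p q (k + 1) i' = lam n \<gamma> eps p q k i + alpha n p * D"
    unfolding lam_def psi_def D_def g'_def by (simp add: algebra_simps)
  have "alpha n p * D \<le> alpha_hat n * (1 / g' ^ k - 1 / g' ^ (k+1))"
    using ap D0 DE by (meson mult_mono order.trans less_imp_le order_refl mult_left_mono)
  also have "\<dots> = eps_k n \<gamma> k - eps_k n \<gamma> (k + 1)"
    unfolding eps_k_def g'_def by (simp add: algebra_simps)
  finally show ?thesis using diff ap D0 by simp
qed

lemma part3:
  assumes n: "n \<ge> 1" and g: "\<gamma> \<ge> 1"
    and ne: "\<exists>r \<in> {1..n}. ii r \<noteq> (jj r :: nat)"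
  shows "Psi n eps q (\<lambda>r. real (ii r) / real \<gamma> ^ k) \<noteq>
        Psi n eps q (\<lambda>r. real (jj r) / real \<gamma> ^ k)"
proof
  assume eq: "Psi n eps q (\<lambda>r. real (ii r) / real \<gamma> ^ k) = Psi n eps q (\<lambda>r. real (jj r) / real \<gamma> ^ k)"
  define t where "t = 2 powr (1 / real n)"
  define c where "c j = int (ii (Suc j)) - int (jj (Suc j))" for j
  have K: "real \<gamma> ^ k > 0" using g by simp
  have "0 = Psi n eps q (\<lambda>r. real (ii r) / real \<gamma> ^ k) - Psi n eps q (\<lambda>r. real (jj r) / real \<gamma> ^ k)"
    using eq by simp
  also have "\<dots> = (\<Sum>p=1..n. alpha n p * ((real (ii p) - real (jj p)) / real \<gamma> ^ k))"
    unfolding Psi_def psi_def by (simp add: sum_subtractf[symmetric] algebra_simps diff_divide_distrib)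
  also have "\<dots> = (\<Sum>j<n. of_int (c j) * t ^ j) / real \<gamma> ^ k"
    by (simp add: sum.atLeast1_atMost_eq sum_divide_distrib c_def alpha_pow t_def mult_ac)
  finally have "(\<Sum>j<n. of_int (c j) * t ^ j) = 0" using K g by auto
  then have "\<forall>j<n. c j = 0" using indep[OF n] tpow[OF n] unfolding t_def by blast
  then show False using ne unfolding c_def
    by (metis Suc_pred' atLeastAtMost_iff diff_less less_one le_less_trans linorder_not_le of_nat_eq_iff eq_iff_diff_eq_0 zero_less_one)
qed

theorem lemma3p2:
  fixes n \<gamma> :: nat and eps :: real
  assumes "n \<ge> 2" and "\<gamma> \<ge> 2 * n + 2"
    and "1 / real \<gamma> ^ 2 < eps" and "eps < 1 / real \<gamma>"
  shows "\<forall>p \<in> {1..n}. \<forall>q \<in> {0..2*n}.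
    (\<exists>C > 0. \<forall>k \<ge> 1. \<forall>i \<le> \<gamma> ^ k - 1.
        lam n \<gamma> eps p q k i < lam n \<gamma> eps p q k (i + 1) \<and>
        lam n \<gamma> eps p q k (i + 1) \<le> lam n \<gamma> eps p q k i + C * 2 powr (- real k))
  \<and> (\<forall>k \<ge> 1. \<forall>i \<le> \<gamma> ^ k - 1. \<forall>i' \<le> \<gamma> ^ (k + 1).
        A \<gamma> eps q k i \<inter> A \<gamma> eps q (k + 1) i' = {} \<and>
        A \<gamma> eps q (k + 1) i' \<subseteq> gap \<gamma> eps q k i \<longrightarrow>
        lam n \<gamma> eps p q k i \<le> lam n \<gamma> eps p q (k + 1) i' \<and>
        lam n \<gamma> eps p q (k + 1) i' \<le>
          lam n \<gamma> eps p q k i + eps_k n \<gamma> k - eps_k n \<gamma> (k + 1))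
  \<and> (\<forall>k \<ge> 1. \<forall>ii jj :: nat \<Rightarrow> nat.
        (\<forall>r \<in> {1..n}. ii r \<le> \<gamma> ^ k \<and> jj r \<le> \<gamma> ^ k) \<and> (\<exists>r \<in> {1..n}. ii r \<noteq> jj r) \<longrightarrow>
        Psi n eps q (\<lambda>r. real (ii r) / real \<gamma> ^ k) \<noteq>
        Psi n eps q (\<lambda>r. real (jj r) / real \<gamma> ^ k))"
  proof (intro ballI conjI)
  fix p q assume p: "p \<in> {1..n}" and q: "q \<in> {0..2*n}"
  have g2: "\<gamma> \<ge> 2" using assms(1,2) by simp
  have n1: "n \<ge> 1" using assms(1) by simp
  have g1: "\<gamma> \<ge> 1" using g2 by simp
  show "\<exists>C > 0. \<forall>k \<ge> 1. \<forall>i \<le> \<gamma> ^ k - 1.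
        lam n \<gamma> eps p q k i < lam n \<gamma> eps p q k (i + 1) \<and>
        lam n \<gamma> eps p q k (i + 1) \<le> lam n \<gamma> eps p q k i + C * 2 powr (- real k)"
    by (rule part1[OF g2])
  show "\<forall>k \<ge> 1. \<forall>i \<le> \<gamma> ^ k - 1. \<forall>i' \<le> \<gamma> ^ (k + 1).
        A \<gamma> eps q k i \<inter> A \<gamma> eps q (k + 1) i' = {} \<and>
        A \<gamma> eps q (k + 1) i' \<subseteq> gap \<gamma> eps q k i \<longrightarrow>
        lam n \<gamma> eps p q k i \<le> lam n \<gamma> eps p q (k + 1) i' \<and>
        lam n \<gamma> eps p q (k + 1) i' \<le>
          lam n \<gamma> eps p q k i + eps_k n \<gamma> k - eps_k n \<gamma> (k + 1)"
    using part2[OF g2 p] by blast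
  show "\<forall>k \<ge> 1. \<forall>ii jj :: nat \<Rightarrow> nat.
        (\<forall>r \<in> {1..n}. ii r \<le> \<gamma> ^ k \<and> jj r \<le> \<gamma> ^ k) \<and> (\<exists>r \<in> {1..n}. ii r \<noteq> jj r) \<longrightarrow>
        Psi n eps q (\<lambda>r. real (ii r) / real \<gamma> ^ k) \<noteq>
        Psi n eps q (\<lambda>r. real (jj r) / real \<gamma> ^ k)"
    using part3[OF n1 g1] by blast
qed

end
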